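(* Let $F_n$ be the Fibonacci numbers, $F_1=F_2=1$, $F_n=F_{n-1}+F_{n-2}$. For $n\ge 1$ put $$\omega_n=\frac{F_{n+2}^2F_{n+3}}{F_{n+1}^2F_n}$$ and consider the cubic equation $$t(2t-1)^2=(t-1)\,\omega_n,$$ whose roots are real and satisfy $G<0<G'<G''$. Then: (a) $G''$ is rational when $n$ is odd, and $G'$ is rational when $n$ is even; (b) this rational root equals $\dfrac{F_{n+3}}{2F_{n+1}}$.
   Context: Background (not needed for the algebraic statement): with $\phi_n=F_{n+1}/F_n$, the $n$-th Fibonacci pentagram has Gauss coordinates $(\alpha,\beta,\gamma,\delta,\epsilon)=(\phi_{n+1},\phi_{n+1},\phi_n,\phi_{n+2}\phi_{n+1}/\phi_n,\phi_n)$, which satisfy $1+\alpha=\gamma\delta$, $1+\beta=\delta\epsilon$, $1+\gamma=\epsilon\alpha$, $1+\delta=\alpha\beta$, $1+\epsilon=\beta\gamma$, and $\omega_n=\alpha\beta\gamma\delta\epsilon=\phi_n\phi_{n+1}^3\phi_{n+2}$. The cubic above is the characteristic equation for the eigenvalues $G,G',G''$ of the quadratic form whose null cone circumscribes the pentagram. *)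

theory Defs
  imports Complex_Main "HOL-Number_Theory.Fib"
begin

definition omega :: "nat \<Rightarrow> real" where
  "omega n = (real (fib (n+2)))^2 * real (fib (n+3)) / ((real (fib (n+1)))^2 * real (fib n))"

definition cubic_eq :: "nat \<Rightarrow> real \<Rightarrow> bool" where
  "cubic_eq n t \<longleftrightarrow> t * (2*t - 1)^2 = (t - 1) * omega n"

end

theory Submission
  imports Defs
begin

lemma abstract_roots:
  fixes r w :: real
  assumes r: "r > 0" and w: "w > 0" and root: "r * (2*r-1)^2 = (r-1) * w"
    and Qr: "8*r^2 - 4*r - w/r \<noteq> 0"
  shows "\<exists>s1 s2. {t. t * (2*t-1)^2 = (t-1) * w} = {s1, r, s2} \<and> s1 < 0 \<and> 0 < s2 \<and>
          (8*r^2 - 4*r - w/r > 0 \<longrightarrow> s2 < r) \<and> (8*r^2 - 4*r - w/r < 0 \<longrightarrow> r < s2)"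
proof -
  define D where "D = (4*r-4)^2 + 16*w/r"
  have Dp: "D > 0" using r w unfolding D_def by (simp add: add_nonneg_pos)
  define s1 where "s1 = (-(4*r-4) - sqrt D)/8"
  define s2 where "s2 = (-(4*r-4) + sqrt D)/8"
  have sq: "sqrt D ^ 2 = D" using Dp by simp
  have gt: "sqrt D > \<bar>4*r-4\<bar>"
  proof -
    have "(4*r-4)^2 < D" unfolding D_def using r w by simp
    then have "sqrt ((4*r-4)^2) < sqrt D" by (simp only: real_sqrt_less_iff)
    then show ?thesis by simp
  qed
  have s1n: "s1 < 0" unfolding s1_def using gt by (auto simp: abs_if split: if_splits)
  have s2p: "s2 > 0" unfolding s2_def using gt by (auto simp: abs_if split: if_splits)
  have Qfac: "4*t^2 + (4*r-4)*t - w/r = 4*(t-s1)*(t-s2)" for t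
  proof -
    have gen: "4*(t-(-p-q)/8)*(t-(-p+q)/8) = 4*t^2 + p*t + (p^2 - q^2)/16" for p q :: real
      by (simp add: field_simps power2_eq_square)
    have "4*(t-s1)*(t-s2) = 4*t^2 + (4*r-4)*t + ((4*r-4)^2 - sqrt D ^2)/16"
      unfolding s1_def s2_def by (rule gen)
    also have "\<dots> = 4*t^2 + (4*r-4)*t - w/r" by (subst sq) (simp add: D_def)
    finally show ?thesis by simp
  qed
  have wr: "w = r * (2*r-1)^2 / (r-1)" if "r \<noteq> 1" using root that by (simp add: field_simps)
  define k where "k = w/r"
  have wk: "w = r*k" unfolding k_def using r by simp
  have kr: "4*r^2-4*r+1 - (r*k-k) = 0"
  proof -
    have "r*(4*r^2-4*r+1 - (r*k-k)) = 0" using root unfolding wk by (simp add: algebra_simps power2_eq_square)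
    then show ?thesis using r by simp
  qed
  have cub: "t * (2*t-1)^2 - (t-1) * w = (t - r) * (4*t^2 + (4*r-4)*t - w/r)" for t
  proof -
    have "(t - r) * (4*t^2 + (4*r-4)*t - k) = t * (2*t-1)^2 - (t-1) * (r*k) - t*(4*r^2-4*r+1 - (r*k-k))"
      by (simp add: algebra_simps power2_eq_square)
    then show ?thesis using kr r unfolding wk k_def[symmetric] by simp
  qed
  have set: "{t. t * (2*t-1)^2 = (t-1) * w} = {s1, r, s2}"
  proof -
    have "t * (2*t-1)^2 = (t-1) * w \<longleftrightarrow> (t - r) * (4*(t-s1)*(t-s2)) = 0" for t
      using cub[of t] Qfac[of t] by (metis eq_iff_diff_eq_0)
    then show ?thesis by auto
  qed
  have Qr': "8*r^2 - 4*r - w/r = 4*(r-s1)*(r-s2)" using Qfac[of r] by (simp add: algebra_simps power2_eq_square)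
  have rs1: "r - s1 > 0" using r s1n by simp
  have A: "8*r^2 - 4*r - w/r > 0 \<longrightarrow> s2 < r"
  proof
    assume "8*r^2 - 4*r - w/r > 0"
    then have "4*(r-s1)*(r-s2) > 0" using Qr' by simp
    then show "s2 < r" using rs1 by (simp add: zero_less_mult_iff)
  qed
  have B: "8*r^2 - 4*r - w/r < 0 \<longrightarrow> r < s2"
  proof
    assume "8*r^2 - 4*r - w/r < 0"
    then have "4*(r-s1)*(r-s2) < 0" using Qr' by simp
    then show "r < s2" using rs1 by (simp add: mult_less_0_iff)
  qed
  show ?thesis using set s1n s2p A B by blast
qed

theorem theorem5p4:
  fixes n :: nat
  assumes "n \<ge> 1"
  shows "\<exists>G G' G''. {t. cubic_eq n t} = {G, G', G''} \<and> G < 0 \<and> 0 < G' \<and> G' < G'' \<and>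
           (odd n \<longrightarrow> G'' \<in> \<rat> \<and> G'' = real (fib (n+3)) / (2 * real (fib (n+1)))) \<and>
           (even n \<longrightarrow> G' \<in> \<rat> \<and> G' = real (fib (n+3)) / (2 * real (fib (n+1))))"
proof -
  define a where "a = real (fib n)"
  define b where "b = real (fib (n+1))"
  have ap: "a > 0" unfolding a_def using assms fib_neq_0_nat by simp
  have bp: "b > 0" unfolding b_def using fib_neq_0_nat by simp
  have f2: "real (fib (n+2)) = a + b" unfolding a_def b_def by (simp add: fib_plus_2)
  have f3: "real (fib (n+3)) = a + 2*b"
  proof -
    have e: "n+3 = (n+1)+2" by simp
    have "fib (n+3) = fib (n+2) + fib (n+1)" unfolding e using fib_plus_2[of "n+1"] by (simp add: ac_simps)
    then have "real (fib (n+3)) = real (fib (n+2)) + real (fib (n+1))" by simp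
    then show ?thesis using f2 unfolding b_def by simp
  qed
  have cas: "a^2 + a*b - b^2 = - ((-1)^n)"
  proof -
    have "real_of_int (int (fib (Suc (Suc n)) * fib n) - int((fib (Suc n))\<^sup>2)) = real_of_int (- ((-1)^n))"
      using fib_Cassini_int[of n] by simp
    then show ?thesis using f2 unfolding a_def b_def by (simp add: algebra_simps power2_eq_square)
  qed
  define w where "w = (a+b)^2*(a+2*b)/(b^2*a)"
  define r where "r = (a+2*b)/(2*b)"
  have om: "omega n = w" unfolding omega_def w_def f2 f3 by (simp add: a_def b_def)
  have rp: "r > 0" unfolding r_def using ap bp by simp
  have wp: "w > 0" unfolding w_def using ap bp by (simp add: add_pos_pos)
  have root: "r * (2*r-1)^2 = (r-1) * w"
  proof -
    have 1: "2*r-1 = (a+b)/b" unfolding r_def using bp by (simp add: field_simps)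
    have 2: "r-1 = a/(2*b)" unfolding r_def using bp by (simp add: field_simps)
    show ?thesis unfolding 1 2 unfolding r_def w_def using ap bp by (simp add: field_simps power2_eq_square)
  qed
  have Qeq: "8*r^2 - 4*r - w/r = 2*(a+b)*(a^2 + a*b - b^2)/(b^2*a)"
  proof -
    have ne: "a + 2*b \<noteq> 0" using ap bp by simp
    have 1: "8*r^2 - 4*r = 2*(a+2*b)*(a+b)/b^2" unfolding r_def using bp by (simp add: field_simps power2_eq_square)
    have "w/r = ((a+b)^2*(a+2*b)*(2*b)) / ((b*a)*(b*(a+2*b)))" unfolding r_def w_def by (simp add: power2_eq_square mult_ac)
    also have "\<dots> = ((2*(a+b)^2)*(b*(a+2*b))) / ((b*a)*(b*(a+2*b)))" by (simp add: mult_ac)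
    also have "\<dots> = 2*(a+b)^2/(b*a)" using ne bp by (rule_tac mult_divide_mult_cancel_right) simp
    finally have 2: "w/r = 2*(a+b)^2/(b*a)" .
    show ?thesis unfolding diff_diff_eq2[symmetric] 1 2 using ap bp by (simp add: field_simps power2_eq_square)
  qed
  have pos: "2*(a+b)/(b^2*a) > 0" using ap bp by simp
  have Qeq2: "8*r^2 - 4*r - w/r = - ((-1)^n) * (2*(a+b)/(b^2*a))"
    using Qeq cas by simp
  have Qr: "8*r^2 - 4*r - w/r \<noteq> 0" using Qeq2 pos ap bp by simp
  obtain s1 s2 where S: "{t. t * (2*t-1)^2 = (t-1) * w} = {s1, r, s2}" "s1 < 0" "0 < s2"
    "8*r^2 - 4*r - w/r > 0 \<longrightarrow> s2 < r" "8*r^2 - 4*r - w/r < 0 \<longrightarrow> r < s2"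
    using abstract_roots[OF rp wp root Qr] by blast
  have ceq: "{t. cubic_eq n t} = {t. t * (2*t-1)^2 = (t-1) * w}"
    unfolding cubic_eq_def om by simp
  have rQ: "r \<in> \<rat>" unfolding r_def a_def b_def by simp
  have rdef: "r = real (fib (n+3)) / (2 * real (fib (n+1)))" unfolding r_def f3 b_def by simp
  show ?thesis
  proof (cases "odd n")
    case True
    then have "8*r^2 - 4*r - w/r > 0" using Qeq2 pos ap bp by simp
    then have "s2 < r" using S by simp
    then show ?thesis using S ceq True rQ rdef
      by (intro exI[of _ s1] exI[of _ s2] exI[of _ r]) auto
  next
    case False
    then have "8*r^2 - 4*r - w/r < 0" using Qeq2 pos ap bp False by (simp add: divide_neg_pos)
    then have "r < s2" using S by simp
    then show ?thesis using S ceq False rQ rdef rp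
      by (intro exI[of _ s1] exI[of _ r] exI[of _ s2]) auto
  qed
qed

end
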